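(* Let $n\ge2$, let $K$ be a field and let $\mathcal{V}=(V,K')$ be a model of the theory of infinite-dimensional non-degenerate alternating $n$-linear spaces over fields elementarily equivalent to $K$, in the language $\mathcal{L}^{K}_{\theta,f}$. Let $U=\{v_i:i<\kappa\}\subseteq V$ be a $K'$-linearly independent set, and let $L\subseteq K'$ be a subfield containing $\{\langle v_{i_1},\ldots,v_{i_n}\rangle_n:0\le i_1<\cdots<i_n<\kappa\}$. Then the $\mathcal{L}^{K}_{\theta,f}$-substructure of $\mathcal{V}$ generated by $U\cup L$ equals $(\operatorname{Span}_L(U),L)$.
   Context: Alternating: the form vanishes on linearly dependent tuples; non-degenerate: for every nonzero $t\in\bigwedge^{n-1}V$ there is $w$ with $\langle t,w\rangle_2\ne0$, where $\langle\overline{v_1\otimes\cdots\otimes v_{n-1}},v\rangle_2=\langle v_1,\ldots,v_{n-1},v\rangle_n$. The language $\mathcal{L}^{K}_{\theta,f}$: sorts $V,K$; field language $\{+,\cdot,-,{}^{-1},0,1\}$ on $K$; $+_V,0_V$; scalar multiplication; the form symbol; predicates $\theta_p$ for linear independence; functions $f^p_i(v;v_1,\ldots,v_p)$ equal to the $i$-th coefficient of $v$ in terms of $v_1,\ldots,v_p$ if these are linearly independent and $v$ is in their span, and $0$ otherwise; and an expansion $\mathcal{L}^K$ of the field language by $\emptyset$-definable relations (no new function or constant symbols). *)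

theory Defs
  imports Complex_Main
begin

definition lin_indep_list :: "('k::field \<Rightarrow> 'v::ab_group_add \<Rightarrow> 'v) \<Rightarrow> 'v list \<Rightarrow> bool" where
  "lin_indep_list scale xs \<longleftrightarrow> distinct xs \<and> \<not> module.dependent scale (set xs)"

definition multilinear_form ::
  "('k::field \<Rightarrow> 'v::ab_group_add \<Rightarrow> 'v) \<Rightarrow> nat \<Rightarrow> ('v list \<Rightarrow> 'k) \<Rightarrow> bool" where
  "multilinear_form scale m \<beta> \<longleftrightarrow>
     (\<forall>xs i x y a b. length xs = m \<longrightarrow> i < m \<longrightarrow>
        \<beta> (xs[i := scale a x + scale b y]) = a * \<beta> (xs[i := x]) + b * \<beta> (xs[i := y]))"

definition alternating_form ::
  "('k::field \<Rightarrow> 'v::ab_group_add \<Rightarrow> 'v) \<Rightarrow> nat \<Rightarrow> ('v list \<Rightarrow> 'k) \<Rightarrow> bool" where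
  "alternating_form scale m \<beta> \<longleftrightarrow>
     multilinear_form scale m \<beta> \<and>
     (\<forall>xs. length xs = m \<longrightarrow> \<not> lin_indep_list scale xs \<longrightarrow> \<beta> xs = 0)"

text \<open>Elements of the exterior power of degree m are represented by formal sums
  sum_j c_j (t_j1 wedge ... wedge t_jm), given as a list of pairs (c_j, t_j) with
  length t_j = m.  Such a formal sum is zero in the exterior power iff every
  alternating m-linear form (the dual of the exterior power) vanishes on it.\<close>
definition wedge_nonzero ::
  "('k::field \<Rightarrow> 'v::ab_group_add \<Rightarrow> 'v) \<Rightarrow> nat \<Rightarrow> ('k \<times> 'v list) list \<Rightarrow> bool" where
  "wedge_nonzero scale m t \<longleftrightarrow>
     (\<exists>\<beta>. alternating_form scale m \<beta> \<and> (\<Sum>(c, ts)\<leftarrow>t. c * \<beta> ts) \<noteq> 0)"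

text \<open>Non-degeneracy of an alternating n-form: for every nonzero t in the
  (n-1)-th exterior power there is w with <t,w>_2 \<noteq> 0, where
  <t1 wedge ... wedge t_{n-1}, w>_2 = <t1,...,t_{n-1},w>_n, extended linearly.\<close>
definition nondegenerate_form ::
  "('k::field \<Rightarrow> 'v::ab_group_add \<Rightarrow> 'v) \<Rightarrow> nat \<Rightarrow> ('v list \<Rightarrow> 'k) \<Rightarrow> bool" where
  "nondegenerate_form scale n form \<longleftrightarrow>
     (\<forall>t. (\<forall>(c, ts)\<in>set t. length ts = n - 1) \<longrightarrow> wedge_nonzero scale (n - 1) t \<longrightarrow>
        (\<exists>w. (\<Sum>(c, ts)\<leftarrow>t. c * form (ts @ [w])) \<noteq> 0))"

text \<open>The function symbols f^p_i (here with 0-based index i < p): the i-th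
  coefficient of v in terms of v_1..v_p if these are linearly independent and v is in
  their span, and 0 otherwise.\<close>
definition coord_fun ::
  "('k::field \<Rightarrow> 'v::ab_group_add \<Rightarrow> 'v) \<Rightarrow> nat \<Rightarrow> 'v \<Rightarrow> 'v list \<Rightarrow> 'k" where
  "coord_fun scale i v vs =
     (if lin_indep_list scale vs \<and> v \<in> module.span scale (set vs)
      then (THE a. \<exists>c. v = (\<Sum>j<length vs. scale (c j) (vs ! j)) \<and> c i = a)
      else 0)"

definition subfield :: "'k::field set \<Rightarrow> bool" where
  "subfield L \<longleftrightarrow> 0 \<in> L \<and> 1 \<in> L \<and> (\<forall>x\<in>L. \<forall>y\<in>L. x + y \<in> L \<and> x * y \<in> L)
     \<and> (\<forall>x\<in>L. - x \<in> L \<and> inverse x \<in> L)"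

definition span_over :: "('k::field \<Rightarrow> 'v::ab_group_add \<Rightarrow> 'v) \<Rightarrow> 'k set \<Rightarrow> 'v set \<Rightarrow> 'v set" where
  "span_over scale L U =
     {\<Sum>u\<in>F. scale (c u) u | F c. finite F \<and> F \<subseteq> U \<and> (\<forall>u\<in>F. c u \<in> L)}"

text \<open>The L^K_{theta,f}-substructure generated by a set SV of vectors and a set SK
  of scalars: the least pair of sets containing them and closed under all function
  symbols (field operations incl. inverse (with inverse 0 = 0), 0, 1, +_V, 0_V,
  scalar multiplication, the form symbol, the functions f^p_i).  Relation symbols
  (theta_p and the symbols of L^K) do not affect the generated substructure.\<close>
inductive genV and genK for scale :: "'k::field \<Rightarrow> 'v::ab_group_add \<Rightarrow> 'v"
  and n :: nat and form :: "'v list \<Rightarrow> 'k" and SV :: "'v set" and SK :: "'k set" where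
  baseV: "v \<in> SV \<Longrightarrow> genV scale n form SV SK v"
| zeroV: "genV scale n form SV SK 0"
| addV: "genV scale n form SV SK v \<Longrightarrow> genV scale n form SV SK w \<Longrightarrow> genV scale n form SV SK (v + w)"
| smul: "genK scale n form SV SK a \<Longrightarrow> genV scale n form SV SK v \<Longrightarrow> genV scale n form SV SK (scale a v)"
| baseK: "a \<in> SK \<Longrightarrow> genK scale n form SV SK a"
| zeroK: "genK scale n form SV SK 0"
| oneK: "genK scale n form SV SK 1"
| addK: "genK scale n form SV SK a \<Longrightarrow> genK scale n form SV SK b \<Longrightarrow> genK scale n form SV SK (a + b)"
| mulK: "genK scale n form SV SK a \<Longrightarrow> genK scale n form SV SK b \<Longrightarrow> genK scale n form SV SK (a * b)"
| negK: "genK scale n form SV SK a \<Longrightarrow> genK scale n form SV SK (- a)"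
| invK: "genK scale n form SV SK a \<Longrightarrow> genK scale n form SV SK (inverse a)"
| formK: "length xs = n \<Longrightarrow> (\<forall>x\<in>set xs. genV scale n form SV SK x) \<Longrightarrow> genK scale n form SV SK (form xs)"
| coordK: "i < length vs \<Longrightarrow> genV scale n form SV SK v \<Longrightarrow> (\<forall>x\<in>set vs. genV scale n form SV SK x)
           \<Longrightarrow> genK scale n form SV SK (coord_fun scale i v vs)"

end

theory Submission
  imports Defs "HOL-Library.Multiset"
begin



lemma subfield_sum: "subfield L \<Longrightarrow> (\<And>i. i \<in> A \<Longrightarrow> f i \<in> L) \<Longrightarrow> sum f A \<in> L"
  by (induction A rule: infinite_finite_induct) (auto simp: subfield_def)

lemma subfield_01: "subfield L \<Longrightarrow> 0 \<in> L" "subfield L \<Longrightarrow> 1 \<in> L"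
  unfolding subfield_def by auto

lemma subfield_ops:
  assumes "subfield L" "x \<in> L" "y \<in> L"
  shows "x + y \<in> L" "x * y \<in> L" "- x \<in> L" "x - y \<in> L" "x / y \<in> L" "inverse x \<in> L"
proof -
  show "x + y \<in> L" "x * y \<in> L" "- x \<in> L" "inverse x \<in> L" using assms unfolding subfield_def by auto
  then show "x - y \<in> L" "x / y \<in> L" using assms unfolding subfield_def
    by (metis diff_conv_add_uminus, metis divide_inverse)
qed

lemma linsys:
  fixes L :: "'k::field set" and a :: "nat \<Rightarrow> 'b \<Rightarrow> 'k"
  assumes L: "subfield L"
  shows "(\<forall>j<p. \<forall>u. a j u \<in> L) \<Longrightarrow> (\<forall>u. (\<Sum>j<p. k j * a j u) = 0) \<Longrightarrow> (\<exists>j<p. k j \<noteq> 0) \<Longrightarrow>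
    \<exists>l. (\<forall>j<p. l j \<in> L) \<and> (\<forall>u. (\<Sum>j<p. l j * a j u) = 0) \<and> (\<exists>j<p. l j \<noteq> 0)"
proof (induction p arbitrary: a k)
  case 0
  then show ?case by simp
next
  case (Suc m)
  show ?case
  proof (cases "\<forall>u. a m u = 0")
    case True
    show ?thesis
      by (rule exI[of _ "\<lambda>j. if j = m then 1 else 0"]) (auto simp: True subfield_01[OF L])
  next
    case False
    then obtain u0 where u0: "a m u0 \<noteq> 0" by auto
    define a' where "a' j u = a j u - (a j u0 / a m u0) * a m u" for j u
    have eq0: "(\<Sum>j<m. k j * a j u0) = - k m * a m u0"
      using Suc.prems(2) by (auto simp: add_eq_0_iff)
    have "(\<Sum>j<m. k j * a' j u) = 0" for u
    proof -
      have "(\<Sum>j<m. k j * a' j u) = (\<Sum>j<m. k j * a j u) - (\<Sum>j<m. k j * a j u0) / a m u0 * a m u"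
        by (simp add: a'_def algebra_simps sum_subtractf sum_distrib_left sum_distrib_right sum_divide_distrib)
      also have "\<dots> = (\<Sum>j<m. k j * a j u) + k m * a m u"
        using u0 by (simp add: eq0)
      also have "\<dots> = 0" using Suc.prems(2) by simp
      finally show ?thesis .
    qed
    moreover have "\<exists>j<m. k j \<noteq> 0"
    proof (rule ccontr)
      assume "\<not> ?thesis"
      then have "k m * a m u0 = 0" using eq0 by simp
      then have "k m = 0" using u0 by simp
      then show False using Suc.prems(3) \<open>\<not> (\<exists>j<m. k j \<noteq> 0)\<close> less_Suc_eq by auto
    qed
    moreover have "\<forall>j<m. \<forall>u. a' j u \<in> L"
      using Suc.prems(1) u0 by (auto simp: a'_def intro!: subfield_ops[OF L])
    ultimately obtain l where l: "\<forall>j<m. l j \<in> L" "\<forall>u. (\<Sum>j<m. l j * a' j u) = 0" "\<exists>j<m. l j \<noteq> 0"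
      using Suc.IH by blast
    define lm where "lm = - (\<Sum>j<m. l j * a j u0) / a m u0"
    define l' where "l' j = (if j = m then lm else l j)" for j
    have "(\<Sum>j<Suc m. l' j * a j u) = 0" for u
    proof -
      have "(\<Sum>j<Suc m. l' j * a j u) = (\<Sum>j<m. l j * a j u) + lm * a m u"
        by (simp add: l'_def)
      also have "(\<Sum>j<m. l j * a j u) = (\<Sum>j<m. l j * a' j u) + (\<Sum>j<m. l j * a j u0) / a m u0 * a m u"
        by (simp add: a'_def algebra_simps sum_subtractf sum_distrib_left sum_distrib_right sum_divide_distrib)
      finally show ?thesis using l(2) by (simp add: lm_def)
    qed
    moreover have "\<forall>j<Suc m. l' j \<in> L"
      using l(1) Suc.prems(1) u0 unfolding l'_def lm_def
      by (auto simp: less_Suc_eq intro!: subfield_ops[OF L] subfield_sum[OF L])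
    moreover have "\<exists>j<Suc m. l' j \<noteq> 0" using l(3) by (auto simp: l'_def)
    ultimately show ?thesis by blast
  qed
qed




context vector_space begin

lemma ml_add:
  assumes "multilinear_form scale m \<beta>" "length xs = m" "i < m"
  shows "\<beta> (xs[i := x + y]) = \<beta> (xs[i := x]) + \<beta> (xs[i := y])"
  using assms(1)[unfolded multilinear_form_def, rule_format, OF assms(2,3), of 1 x 1 y] by simp

lemma ml_scale:
  assumes "multilinear_form scale m \<beta>" "length xs = m" "i < m"
  shows "\<beta> (xs[i := c *s x]) = c * \<beta> (xs[i := x])"
  using assms(1)[unfolded multilinear_form_def, rule_format, OF assms(2,3), of c x 0 0] by simp

lemma ml_zero:
  assumes "multilinear_form scale m \<beta>" "length xs = m" "i < m"
  shows "\<beta> (xs[i := 0]) = 0"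
  using ml_scale[OF assms, of 0 0] by simp

lemma ml_sum:
  assumes "multilinear_form scale m \<beta>" "length xs = m" "i < m"
  shows "\<beta> (xs[i := (\<Sum>u\<in>F. c u *s g u)]) = (\<Sum>u\<in>F. c u * \<beta> (xs[i := g u]))"
proof (induction F rule: infinite_finite_induct)
  case (infinite A)
  then show ?case using ml_zero[OF assms] by simp
next
  case empty
  then show ?case using ml_zero[OF assms] by simp
next
  case (insert x F)
  then show ?case using ml_add[OF assms] ml_scale[OF assms] by simp
qed

lemma alt_swap:
  assumes alt: "alternating_form scale m \<beta>" and z: "length z = m" and ij: "i < m" "j < m" "i \<noteq> j"
  shows "\<beta> (z[i := z!j, j := z!i]) = - \<beta> z"
proof -
  have ml: "multilinear_form scale m \<beta>" using alt by (simp add: alternating_form_def)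
  define f where "f a b = \<beta> (z[i := a, j := b])" for a b
  have l2: "f a (b + c) = f a b + f a c" for a b c
    unfolding f_def using ml_add[OF ml _ ij(2), of "z[i:=a]"] z by simp
  have l1: "f (a + b) c = f a c + f b c" for a b c
  proof -
    have e: "z[i := d, j := c] = z[j := c, i := d]" for d using ij by (simp add: list_update_swap)
    show ?thesis unfolding f_def e using ml_add[OF ml _ ij(1), of "z[j:=c]"] z by simp
  qed
  have d: "f a a = 0" for a
  proof -
    have "\<not> distinct (z[i := a, j := a])"
    proof
      assume "distinct (z[i := a, j := a])"
      moreover have "z[i := a, j := a] ! i = a" "z[i := a, j := a] ! j = a" using ij z by (auto simp: nth_list_update)
      ultimately show False using ij z by (metis length_list_update nth_eq_iff_index_eq)
    qed
    then show ?thesis using alt z unfolding f_def alternating_form_def lin_indep_list_def by simp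
  qed
  have "0 = f (z!i + z!j) (z!i + z!j)" using d by simp
  also have "\<dots> = f (z!i) (z!j) + f (z!j) (z!i)" unfolding l1 unfolding l2 unfolding d by simp
  finally have "f (z!j) (z!i) = - f (z!i) (z!j)" by (simp add: eq_neg_iff_add_eq_0 add.commute)
  moreover have "f (z!i) (z!j) = \<beta> z" unfolding f_def by simp
  ultimately show ?thesis unfolding f_def by simp
qed

lemma alt_perm_distinct:
  assumes alt: "alternating_form scale m \<beta>" and xs: "length xs = m" "distinct xs"
  shows "mset ys = mset xs \<Longrightarrow> \<beta> ys = \<beta> xs \<or> \<beta> ys = - \<beta> xs"
proof (induction "card {i. i < m \<and> ys!i \<noteq> xs!i}" arbitrary: ys rule: less_induct)
  case less
  have ly: "length ys = m" using less.prems xs by (metis mset_eq_length)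
  show ?case
  proof (cases "ys = xs")
    case True
    then show ?thesis by simp
  next
    case False
    then obtain i where i: "i < m" "ys!i \<noteq> xs!i" using ly xs nth_equalityI by metis
    have "xs!i \<in> set ys" using less.prems i xs by (metis mset_eq_setD nth_mem)
    then obtain j where j: "j < m" "ys!j = xs!i" using ly by (metis in_set_conv_nth)
    have ij: "i \<noteq> j" using i j by auto
    have jD: "ys!j \<noteq> xs!j" using j ij i xs by (simp add: nth_eq_iff_index_eq)
    define ys' where "ys' = ys[j := ys!i, i := ys!j]"
    have m': "mset ys' = mset xs" unfolding ys'_def using less.prems i j ly mset_swap[of i ys j] by simp
    have sub: "{k. k < m \<and> ys'!k \<noteq> xs!k} \<subset> {k. k < m \<and> ys!k \<noteq> xs!k}"
      using i j jD ij ly unfolding ys'_def by (auto simp: nth_list_update)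
    have "card {k. k < m \<and> ys'!k \<noteq> xs!k} < card {k. k < m \<and> ys!k \<noteq> xs!k}"
      by (rule psubset_card_mono[OF _ sub]) simp
    then have ih: "\<beta> ys' = \<beta> xs \<or> \<beta> ys' = - \<beta> xs" using less.hyps m' by blast
    have "\<beta> ys' = - \<beta> ys" unfolding ys'_def using alt_swap[OF alt ly j(1) i(1)] ij by simp
    then show ?thesis using ih by (metis minus_minus)
  qed
qed

lemma alt_perm:
  assumes alt: "alternating_form scale m \<beta>" and xs: "length xs = m" and "mset ys = mset xs"
  shows "\<beta> ys = \<beta> xs \<or> \<beta> ys = - \<beta> xs"
proof (cases "distinct xs")
  case True
  then show ?thesis using alt_perm_distinct assms by blast
next
  case False
  then have "\<not> distinct ys" using assms(3) using mset_eq_imp_distinct_iff by metis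
  moreover have "length ys = m" using assms by (metis mset_eq_length)
  ultimately show ?thesis using False alt xs unfolding alternating_form_def lin_indep_list_def by simp
qed

end



lemma sum_set_nth:
  assumes "distinct vs"
  shows "(\<Sum>x\<in>set vs. g x) = (\<Sum>j<length vs. g (vs!j))"
proof -
  have s: "set vs = nth vs ` {..<length vs}" by (auto simp: in_set_conv_nth image_def)
  show ?thesis unfolding s
    by (subst sum.reindex) (auto intro: inj_on_nth[OF assms])
qed

context vector_space begin

lemma span_over_char:
  assumes U: "independent U" and L: "subfield L"
  shows "span_over scale L U = {x. x \<in> span U \<and> (\<forall>u. representation U x u \<in> L)}"
proof (intro equalityI subsetI)
  fix y assume "y \<in> span_over scale L U"
  then obtain F c where F: "finite F" "F \<subseteq> U" "\<forall>u\<in>F. c u \<in> L" and y: "y = (\<Sum>u\<in>F. c u *s u)"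
    unfolding span_over_def by blast
  have sp: "(\<Sum>u\<in>F. c u *s u) \<in> span U"
    using F by (intro span_sum span_scale span_base) auto
  have "representation U (\<Sum>u\<in>F. c u *s u) b \<in> L" for b
  proof -
  have "representation U (\<Sum>u\<in>F. c u *s u) b = (\<Sum>u\<in>F. c u * (if b = u then 1 else 0))"
  proof -
    have t: "c u *s u \<in> span U" if "u \<in> F" for u using that F by (intro span_scale span_base) auto
    have "representation U (\<Sum>u\<in>F. c u *s u) b = (\<Sum>i\<in>F. representation U (c i *s i) b)"
      using representation_sum[OF U, of F "\<lambda>u. c u *s u"] t by simp
    also have "\<dots> = (\<Sum>u\<in>F. c u * (if b = u then 1 else 0))"
      using F by (intro sum.cong) (auto simp: representation_scale[OF U span_base] representation_basis[OF U])
    finally show ?thesis .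
  qed
  also have "\<dots> = (\<Sum>u\<in>F. if b = u then c u else 0)" by (rule sum.cong) auto
  also have "\<dots> \<in> L" using F L by (auto simp: subfield_01)
  finally show ?thesis .
  qed
  then show "y \<in> {x. x \<in> span U \<and> (\<forall>u. representation U x u \<in> L)}" using sp y by simp
next
  fix x assume "x \<in> {x. x \<in> span U \<and> (\<forall>u. representation U x u \<in> L)}"
  then have x: "x \<in> span U" "\<forall>u. representation U x u \<in> L" by auto
  show "x \<in> span_over scale L U"
    unfolding span_over_def
    apply (rule CollectI)
    apply (rule exI[of _ "{b. representation U x b \<noteq> 0}"])
    apply (rule exI[of _ "representation U x"])
    using x U finite_representation representation_ne_zero sum_nonzero_representation_eq
    by auto
qed

definition (in -) "inL scale U L x \<longleftrightarrow> x \<in> module.span scale U \<and> (\<forall>u. module.representation scale U x u \<in> L)"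

lemma inL_0: "independent U \<Longrightarrow> subfield L \<Longrightarrow> inL scale U L 0"
  by (simp add: inL_def representation_zero span_zero subfield_01)

lemma inL_add: "independent U \<Longrightarrow> subfield L \<Longrightarrow> inL scale U L x \<Longrightarrow> inL scale U L y \<Longrightarrow> inL scale U L (x + y)"
  by (simp add: inL_def representation_add span_add subfield_ops)

lemma inL_scale: "independent U \<Longrightarrow> subfield L \<Longrightarrow> a \<in> L \<Longrightarrow> inL scale U L x \<Longrightarrow> inL scale U L (a *s x)"
  by (simp add: inL_def representation_scale span_scale subfield_ops)

lemma inL_base: "independent U \<Longrightarrow> subfield L \<Longrightarrow> u \<in> U \<Longrightarrow> inL scale U L u"
  by (simp add: inL_def representation_basis span_base subfield_01)

lemma rep_zero_imp: "independent U \<Longrightarrow> y \<in> span U \<Longrightarrow> (\<forall>u. representation U y u = 0) \<Longrightarrow> y = 0"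
  using sum_nonzero_representation_eq[of U y] by simp

lemma uniq_coeffs:
  assumes d: "distinct vs" "independent (set vs)"
    and eq: "(\<Sum>j<length vs. c j *s vs!j) = (\<Sum>j<length vs. e j *s vs!j)" and i: "i < length vs"
  shows "c i = e i"
proof -
  define u where "u (x::'b) = c (inv_into {..<length vs} (nth vs) x) - e (inv_into {..<length vs} (nth vs) x)" for x
  have inv: "inv_into {..<length vs} (nth vs) (vs!j) = j" if "j < length vs" for j
    using that inv_into_f_f[OF inj_on_nth[OF d(1), of "{..<length vs}"]] by simp
  have "(\<Sum>x\<in>set vs. u x *s x) = (\<Sum>j<length vs. (c j - e j) *s vs!j)"
    unfolding sum_set_nth[OF d(1)] u_def by (auto intro!: sum.cong simp: inv)
  also have "\<dots> = 0" using eq by (simp add: scale_left_diff_distrib sum_subtractf)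
  finally have "u (vs!i) = 0" using independentD[OF d(2), of "set vs" u "vs!i"] i by simp
  then show ?thesis using i by (simp add: u_def inv)
qed

end



context vector_space begin

lemma coord_in_L:
  assumes U: "independent U" and L: "subfield L" and w: "inL scale U L w"
    and vs: "\<forall>x\<in>set vs. inL scale U L x" and i: "i < length vs"
  shows "coord_fun scale i w vs \<in> L"
proof (cases "lin_indep_list scale vs \<and> w \<in> span (set vs)")
  case False
  then show ?thesis unfolding coord_fun_def using subfield_01[OF L] by auto
next
  case True
  define p where "p = length vs"
  have d: "distinct vs" "independent (set vs)" using True by (auto simp: lin_indep_list_def)
  obtain k where wk: "w = (\<Sum>j<p. k j *s vs!j)"
  proof -
    obtain u where "w = (\<Sum>x\<in>set vs. u x *s x)" using True span_finite[of "set vs"] by auto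
    then show ?thesis using that[of "\<lambda>j. u (vs!j)"] by (simp add: sum_set_nth[OF d(1)] p_def)
  qed
  define x where "x j = (if j < p then vs!j else w)" for j
  define k' where "k' j = (if j < p then k j else -1)" for j
  have xin: "inL scale U L (x j)" if "j < Suc p" for j
    using that vs w by (auto simp: x_def p_def)
  have xsp: "x j \<in> span U" if "j < Suc p" for j using xin[OF that] by (simp add: inL_def)
  have split: "(\<Sum>j<Suc p. c j *s x j) = (\<Sum>j<p. c j *s vs!j) + c p *s w" for c
    by (simp add: x_def)
  have rep: "representation U (\<Sum>j<Suc p. c j *s x j) u = (\<Sum>j<Suc p. c j * representation U (x j) u)" for c u
  proof -
    have "representation U (\<Sum>j<Suc p. c j *s x j) u = (\<Sum>j<Suc p. representation U (c j *s x j) u)"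
      using representation_sum[OF U, of "{..<Suc p}" "\<lambda>j. c j *s x j"] xsp span_scale by simp
    also have "\<dots> = (\<Sum>j<Suc p. c j * representation U (x j) u)"
      by (rule sum.cong) (auto simp: representation_scale[OF U xsp])
    finally show ?thesis .
  qed
  have "(\<Sum>j<Suc p. k' j *s x j) = 0"
  proof -
    have "(\<Sum>j<p. k' j *s vs!j) = (\<Sum>j<p. k j *s vs!j)" by (rule sum.cong) (auto simp: k'_def)
    then show ?thesis unfolding split using wk by (simp add: k'_def)
  qed
  then have "\<forall>u. (\<Sum>j<Suc p. k' j * representation U (x j) u) = 0"
    using rep[of k'] by (simp add: representation_zero)
  moreover have "\<forall>j<Suc p. \<forall>u. representation U (x j) u \<in> L" using xin by (simp add: inL_def)
  moreover have "\<exists>j<Suc p. k' j \<noteq> 0" by (rule exI[of _ p]) (simp add: k'_def)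
  ultimately obtain l where l: "\<forall>j<Suc p. l j \<in> L" "\<forall>u. (\<Sum>j<Suc p. l j * representation U (x j) u) = 0"
      "\<exists>j<Suc p. l j \<noteq> 0"
    using linsys[OF L, of "Suc p" "\<lambda>j u. representation U (x j) u" k'] by blast
  have "(\<Sum>j<Suc p. l j *s x j) = 0"
  proof (rule rep_zero_imp[OF U])
    show "(\<Sum>j<Suc p. l j *s x j) \<in> span U"
      by (rule span_sum, rule span_scale, rule xsp) simp
    show "\<forall>u. representation U (\<Sum>j<Suc p. l j *s x j) u = 0" unfolding rep using l(2) by blast
  qed
  then have l0: "(\<Sum>j<p. l j *s vs!j) + l p *s w = 0" unfolding split .
  have lp: "l p \<noteq> 0"
  proof
    assume "l p = 0"
    then have "(\<Sum>j<p. l j *s vs!j) = (\<Sum>j<p. 0 *s vs!j)" using l0 by simp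
    then have "l j = 0" if "j < p" for j using uniq_coeffs[OF d _ that[unfolded p_def], of l "\<lambda>_. 0"] \<open>(\<Sum>j<p. l j *s vs!j) = (\<Sum>j<p. 0 *s vs!j)\<close> by (simp add: p_def)
    then show False using l(3) \<open>l p = 0\<close> less_Suc_eq by auto
  qed
  define m where "m j = - l j / l p" for j
  have wm: "w = (\<Sum>j<p. m j *s vs!j)"
  proof -
    have "l p *s w = - (\<Sum>j<p. l j *s vs!j)" using l0 by (simp add: eq_neg_iff_add_eq_0 add.commute)
    then have "w = (- inverse (l p)) *s (\<Sum>j<p. l j *s vs!j)"
      using lp by (metis scale_minus_left scale_minus_right scale_one scale_scale left_inverse)
    also have "\<dots> = (\<Sum>j<p. m j *s vs!j)"
      by (simp add: scale_sum_right m_def divide_inverse mult.commute)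
    finally show ?thesis .
  qed
  have mL: "m i \<in> L" using l(1) i lp by (auto simp: m_def p_def intro!: subfield_ops[OF L])
  have "(THE a. \<exists>c. w = (\<Sum>j<length vs. c j *s vs!j) \<and> c i = a) = m i"
  proof (rule the_equality)
    show "\<exists>c. w = (\<Sum>j<length vs. c j *s vs!j) \<and> c i = m i" using wm p_def by blast
    fix a assume "\<exists>c. w = (\<Sum>j<length vs. c j *s vs!j) \<and> c i = a"
    then obtain c where "w = (\<Sum>j<length vs. c j *s vs!j)" "c i = a" by blast
    then show "a = m i" using uniq_coeffs[OF d _ i, of c m] wm p_def by simp
  qed
  then show ?thesis using True mL by (simp add: coord_fun_def)
qed

end


context vector_space begin
lemma form_base:
  fixes v :: "'i::linorder \<Rightarrow> 'b"
  assumes L: "subfield L" and alt: "alternating_form scale n \<beta>" and inj: "inj_on v I"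
    and H: "\<forall>is. length is = n \<longrightarrow> sorted_wrt (<) is \<longrightarrow> set is \<subseteq> I \<longrightarrow> \<beta> (map v is) \<in> L"
    and xs: "length xs = n" "set xs \<subseteq> v ` I"
  shows "\<beta> xs \<in> L"
proof (cases "distinct xs")
  case False
  then have "\<not> lin_indep_list scale xs" by (simp add: lin_indep_list_def)
  then have "\<beta> xs = 0" using alt xs(1) unfolding alternating_form_def by blast
  then show ?thesis using subfield_01[OF L] by simp
next
  case True
  define "is" where "is = map (the_inv_into I v) xs"
  have mv: "map v is = xs" unfolding is_def map_map
    by (intro map_idI) (simp add: f_the_inv_into_f[OF inj] subsetD[OF xs(2)])
  have sI: "set is \<subseteq> I" unfolding is_def using xs(2)
    by (auto intro!: the_inv_into_into[OF inj _ subset_refl])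
  have di: "distinct is" using True mv by (metis distinct_map)
  define js where "js = sort is"
  have "sorted_wrt (<) js" unfolding js_def using di by (simp add: strict_sorted_iff)
  moreover have "length js = n" unfolding js_def is_def using xs(1) by simp
  moreover have "set js \<subseteq> I" using sI by (simp add: js_def)
  ultimately have inL: "\<beta> (map v js) \<in> L" using H by blast
  have "mset (map v js) = mset (map v is)" by (simp add: js_def)
  then have "mset xs = mset (map v js)" using mv by simp
  then have "\<beta> xs = \<beta> (map v js) \<or> \<beta> xs = - \<beta> (map v js)"
    using alt_perm[OF alt, of "map v js" xs] \<open>length js = n\<close> by simp
  then show ?thesis using inL subfield_ops(3)[OF L inL inL] by auto
qed
lemma form_in_L:
  fixes v :: "'i::linorder \<Rightarrow> 'b"
  assumes U: "independent (v ` I)" and L: "subfield L" and alt: "alternating_form scale n \<beta>" and inj: "inj_on v I"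
    and H: "\<forall>is. length is = n \<longrightarrow> sorted_wrt (<) is \<longrightarrow> set is \<subseteq> I \<longrightarrow> \<beta> (map v is) \<in> L"
    and xs: "length xs = n" "\<forall>x\<in>set xs. inL scale (v ` I) L x"
  shows "\<beta> xs \<in> L"
proof -
  have ml: "multilinear_form scale n \<beta>" using alt by (simp add: alternating_form_def)
  have Q: "\<forall>xs. length xs = n \<longrightarrow> (\<forall>x\<in>set xs. inL scale (v ` I) L x) \<longrightarrow>
     (\<forall>j. k \<le> j \<longrightarrow> j < n \<longrightarrow> xs!j \<in> v ` I) \<longrightarrow> \<beta> xs \<in> L" for k
  proof (induction k)
    case 0
    show ?case
    proof (intro allI impI)
      fix xs :: "'b list" assume a: "length xs = n" "\<forall>x\<in>set xs. inL scale (v ` I) L x"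
        "\<forall>j. 0 \<le> j \<longrightarrow> j < n \<longrightarrow> xs!j \<in> v ` I"
      then have "set xs \<subseteq> v ` I" by (auto simp: in_set_conv_nth)
      then show "\<beta> xs \<in> L" using form_base[OF L alt inj H] a(1) by blast
    qed
  next
    case (Suc k)
    show ?case
    proof (intro allI impI)
      fix xs :: "'b list" assume a: "length xs = n" "\<forall>x\<in>set xs. inL scale (v ` I) L x"
        "\<forall>j. Suc k \<le> j \<longrightarrow> j < n \<longrightarrow> xs!j \<in> v ` I"
      show "\<beta> xs \<in> L"
      proof (cases "k < n")
        case False
        then have "\<forall>j. k \<le> j \<longrightarrow> j < n \<longrightarrow> xs!j \<in> v ` I" by simp
        then show ?thesis using Suc.IH a(1,2) by blast
      next
        case True
        define y where "y = xs!k"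
        have yL: "inL scale (v ` I) L y" using a(2) True a(1) by (simp add: y_def)
        define r where "r = representation (v ` I) y"
        define S where "S = {b. r b \<noteq> 0}"
        have yS: "y = (\<Sum>b\<in>S. r b *s b)"
          using sum_nonzero_representation_eq[OF U, of y] yL by (simp add: inL_def r_def S_def)
        have SU: "S \<subseteq> v ` I" using representation_ne_zero by (auto simp: S_def r_def)
        have rL: "r b \<in> L" for b using yL by (simp add: inL_def r_def)
        have "\<beta> xs = \<beta> (xs[k := y])" by (simp add: y_def)
        also have "\<dots> = (\<Sum>b\<in>S. r b * \<beta> (xs[k := b]))"
          unfolding yS using ml_sum[OF ml a(1) True, of r "\<lambda>b. b" S] by simp
        also have "\<dots> \<in> L"
        proof (rule subfield_sum[OF L], rule subfield_ops(2)[OF L rL])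
          fix b assume b: "b \<in> S"
          have "length (xs[k := b]) = n" using a(1) by simp
          moreover have "\<forall>x\<in>set (xs[k := b]). inL scale (v ` I) L x"
          proof
            fix x assume "x \<in> set (xs[k := b])"
            then have "x = b \<or> x \<in> set xs" using set_update_subset_insert[of xs k b] by blast
            then show "inL scale (v ` I) L x" using a(2) inL_base[OF U L, of b] SU b by blast
          qed
          moreover have "\<forall>j. k \<le> j \<longrightarrow> j < n \<longrightarrow> xs[k := b]!j \<in> v ` I"
          proof (intro allI impI)
            fix j assume j: "k \<le> j" "j < n"
            show "xs[k := b]!j \<in> v ` I"
            proof (cases "j = k")
              case True then show ?thesis using SU b a(1) j by auto
            next
              case False
              then have "Suc k \<le> j" using j by simp
              then show ?thesis using a(3) j False by simp
            qed
          qed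
          ultimately show "\<beta> (xs[k := b]) \<in> L" using Suc.IH by blast
        qed
        finally show ?thesis .
      qed
    qed
  qed
  have "\<forall>j. n \<le> j \<longrightarrow> j < n \<longrightarrow> xs!j \<in> v ` I" by simp
  then show ?thesis using Q[of n] xs by blast
qed

end

theorem lemma2p15:
  fixes scale :: "'k::field \<Rightarrow> 'v::ab_group_add \<Rightarrow> 'v"
    and n :: nat
    and form :: "'v list \<Rightarrow> 'k"
    and I :: "'i::wellorder set"
    and v :: "'i \<Rightarrow> 'v"
    and L :: "'k set"
  assumes "n \<ge> 2"
    and "vector_space scale"
    and "\<not> (\<exists>B. finite B \<and> module.span scale B = UNIV)"
    and "alternating_form scale n form"
    and "nondegenerate_form scale n form"
    and "inj_on v I"
    and "\<not> module.dependent scale (v ` I)"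
    and "subfield L"
    and "\<forall>is. length is = n \<longrightarrow> sorted_wrt (<) is \<longrightarrow> set is \<subseteq> I \<longrightarrow> form (map v is) \<in> L"
  shows "{x. genV scale n form (v ` I) L x} = span_over scale L (v ` I)
       \<and> {a. genK scale n form (v ` I) L a} = L"
proof -
  interpret vector_space scale by fact
  note U = assms(7) and L = assms(8)
  have fwd: "(genV scale n form (v ` I) L x \<longrightarrow> inL scale (v ` I) L x) \<and>
        (genK scale n form (v ` I) L a \<longrightarrow> a \<in> L)" for x a
  proof (induction rule: genV_genK.induct)
    case (baseV v) then show ?case using inL_base[OF U L] by simp
  next
    case zeroV then show ?case using inL_0[OF U L] by simp
  next
    case (addV v w) then show ?case using inL_add[OF U L] by simp
  next
    case (smul a v) then show ?case using inL_scale[OF U L] by simp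
  next
    case (baseK a) then show ?case by simp
  next
    case zeroK then show ?case using subfield_01[OF L] by simp
  next
    case oneK then show ?case using subfield_01[OF L] by simp
  next
    case (addK a b) then show ?case using subfield_ops[OF L] by simp
  next
    case (mulK a b) then show ?case using subfield_ops[OF L] by simp
  next
    case (negK a) then show ?case using subfield_ops[OF L] by simp
  next
    case (invK a) then show ?case using subfield_ops[OF L] by simp
  next
    case (formK xs) then show ?case using form_in_L[OF U L assms(4,6,9)] by simp
  next
    case (coordK i vs w) then show ?case using coord_in_L[OF U L] by simp
  qed
  have bwd: "genV scale n form (v ` I) L (\<Sum>u\<in>F. scale (c u) u)"
    if "finite F" "F \<subseteq> v ` I" "\<forall>u\<in>F. c u \<in> L" for F c
    using that
  proof (induction F rule: finite_induct)
    case empty then show ?case by (simp add: genV_genK.zeroV)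
  next
    case (insert x F)
    then have "c x \<in> L" "x \<in> v ` I" by auto
    then have "genV scale n form (v ` I) L (scale (c x) x)"
      by (intro genV_genK.smul genV_genK.baseK genV_genK.baseV)
    then show ?case using insert by (simp add: genV_genK.addV)
  qed
  have "{x. genV scale n form (v ` I) L x} = span_over scale L (v ` I)"
  proof (intro equalityI subsetI)
    fix x assume "x \<in> {x. genV scale n form (v ` I) L x}"
    then show "x \<in> span_over scale L (v ` I)" using fwd span_over_char[OF U L] by (auto simp: inL_def)
  next
    fix x assume "x \<in> span_over scale L (v ` I)"
    then show "x \<in> {x. genV scale n form (v ` I) L x}" using bwd unfolding span_over_def by auto
  qed
  moreover have "{a. genK scale n form (v ` I) L a} = L"
    using fwd by (auto intro: genV_genK.baseK)
  ultimately show ?thesis by simp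
qed


end
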